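(* No flower is a Burling graph.
   Context: Graphs are finite, without loops or multiple edges. A hole in a graph is an induced cycle of length at least $4$. A flower is a graph $G$ consisting of a hole $H$ together with, for every edge $e$ of $H$, a hole $H_e$ of $G$ containing $e$, such that $V(H)\cap V(H_e)$ is exactly the set of the two endpoints of $e$; for all distinct edges $e,f$ of $H$, $V(H_e)\cap V(H_f)$ is the set of common endpoints of $e$ and $f$; and the vertices and edges of $G$ are exactly those of the holes $H_e$. In a rooted tree $T$ with root $r$, each non-root vertex $v$ has a parent $p(v)$; children, leaves, ancestors and descendants are as usual. A branch is a sequence $v_1\dots v_k$ ($k\ge0$) with $v_i$ the parent of $v_{i+1}$; it starts at $v_1$. A Burling tree is a 4-tuple $(T,r,\ell,c)$: $T$ a rooted tree with root $r$; $\ell$ assigns to each non-leaf vertex $v$ one of its children $\ell(v)$ (the last-born of $v$); $c$ assigns to every vertex $v$ that is neither the root nor a last-born the vertex-set of a (possibly empty) branch starting at $\ell(p(v))$, and $c(v)=\emptyset$ if $v$ is the root or a last-born. The oriented graph fully derived from it has vertex-set $V(T)$ and an arc $uv$ iff $v\in c(u)$. A (non-oriented) graph is a Burling graph if it is isomorphic to an induced subgraph of the underlying graph of the oriented graph fully derived from some Burling tree. *)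

theory Defs
  imports Main
begin

definition sgraph :: "'a set \<Rightarrow> ('a \<Rightarrow> 'a \<Rightarrow> bool) \<Rightarrow> bool" where
  "sgraph V E \<longleftrightarrow> finite V \<and> (\<forall>x y. E x y \<longrightarrow> x \<in> V \<and> y \<in> V \<and> x \<noteq> y \<and> E y x)"

definition is_hole :: "'a set \<Rightarrow> ('a \<Rightarrow> 'a \<Rightarrow> bool) \<Rightarrow> 'a set \<Rightarrow> bool" where
  "is_hole V E C \<longleftrightarrow> C \<subseteq> V \<and>
     (\<exists>vs. distinct vs \<and> set vs = C \<and> length vs \<ge> 4 \<and>
        (\<forall>i < length vs. \<forall>j < length vs.
            E (vs ! i) (vs ! j) \<longleftrightarrow> (j = Suc i mod length vs \<or> i = Suc j mod length vs)))"

definition induced_edges :: "('a \<Rightarrow> 'a \<Rightarrow> bool) \<Rightarrow> 'a set \<Rightarrow> 'a set set" where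
  "induced_edges E C = {{x, y} | x y. x \<in> C \<and> y \<in> C \<and> E x y}"

definition flower :: "'a set \<Rightarrow> ('a \<Rightarrow> 'a \<Rightarrow> bool) \<Rightarrow> bool" where
  "flower V E \<longleftrightarrow> (\<exists>H Hf.
     is_hole V E H \<and>
     (\<forall>e \<in> induced_edges E H. is_hole V E (Hf e) \<and> e \<subseteq> Hf e \<and> H \<inter> Hf e = e) \<and>
     (\<forall>e \<in> induced_edges E H. \<forall>f \<in> induced_edges E H. e \<noteq> f \<longrightarrow> Hf e \<inter> Hf f = e \<inter> f) \<and>
     V = (\<Union>e \<in> induced_edges E H. Hf e) \<and>
     (\<forall>x y. E x y \<longleftrightarrow> (\<exists>e \<in> induced_edges E H. {x, y} \<in> induced_edges E (Hf e))))"

text \<open>Rooted trees: vertex set T, root r, parent function p (relevant on T - {r}).\<close>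
definition children :: "nat set \<Rightarrow> nat \<Rightarrow> (nat \<Rightarrow> nat) \<Rightarrow> nat \<Rightarrow> nat set" where
  "children T r p v = {u \<in> T - {r}. p u = v}"

definition rooted_tree :: "nat set \<Rightarrow> nat \<Rightarrow> (nat \<Rightarrow> nat) \<Rightarrow> bool" where
  "rooted_tree T r p \<longleftrightarrow> finite T \<and> r \<in> T \<and> (\<forall>v \<in> T - {r}. p v \<in> T) \<and>
     (\<forall>v \<in> T. \<exists>n. (p ^^ n) v = r)"

definition is_branch :: "nat set \<Rightarrow> nat \<Rightarrow> (nat \<Rightarrow> nat) \<Rightarrow> nat list \<Rightarrow> bool" where
  "is_branch T r p xs \<longleftrightarrow> set xs \<subseteq> T \<and>
     (\<forall>i. Suc i < length xs \<longrightarrow> xs ! Suc i \<noteq> r \<and> p (xs ! Suc i) = xs ! i)"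

definition last_born :: "nat set \<Rightarrow> nat \<Rightarrow> (nat \<Rightarrow> nat) \<Rightarrow> (nat \<Rightarrow> nat) \<Rightarrow> nat \<Rightarrow> bool" where
  "last_born T r p l v \<longleftrightarrow> v \<in> T \<and> v \<noteq> r \<and> l (p v) = v"

definition burling_tree ::
  "nat set \<Rightarrow> nat \<Rightarrow> (nat \<Rightarrow> nat) \<Rightarrow> (nat \<Rightarrow> nat) \<Rightarrow> (nat \<Rightarrow> nat set) \<Rightarrow> bool" where
  "burling_tree T r p l c \<longleftrightarrow> rooted_tree T r p \<and>
     (\<forall>v \<in> T. children T r p v \<noteq> {} \<longrightarrow> l v \<in> children T r p v) \<and>
     (\<forall>v \<in> T. (v = r \<or> last_born T r p l v) \<longrightarrow> c v = {}) \<and>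
     (\<forall>v \<in> T. v \<noteq> r \<and> \<not> last_born T r p l v \<longrightarrow>
        (\<exists>xs. is_branch T r p xs \<and> (xs = [] \<or> hd xs = l (p v)) \<and> c v = set xs))"

text \<open>G is a Burling graph: isomorphic to an induced subgraph of the underlying graph of the
  oriented graph fully derived from some Burling tree (arc uv iff v \<in> c u).\<close>
definition burling_graph :: "'a set \<Rightarrow> ('a \<Rightarrow> 'a \<Rightarrow> bool) \<Rightarrow> bool" where
  "burling_graph V E \<longleftrightarrow> (\<exists>T r p l c f. burling_tree T r p l c \<and> inj_on f V \<and> f ` V \<subseteq> T \<and>
     (\<forall>x \<in> V. \<forall>y \<in> V. E x y \<longleftrightarrow> (f y \<in> c (f x) \<or> f x \<in> c (f y))))"

end

theory Submission
  imports Defs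
begin


definition dep :: "(nat \<Rightarrow> nat) \<Rightarrow> nat \<Rightarrow> nat \<Rightarrow> nat" where
  "dep p r v = (LEAST n. (p ^^ n) v = r)"

definition Bt :: "(nat \<Rightarrow> nat) \<Rightarrow> nat \<Rightarrow> nat \<Rightarrow> nat \<Rightarrow> bool" where
  "Bt p r y z \<longleftrightarrow> (\<exists>j>0. (p ^^ j) y = z \<and> dep p r z + j = dep p r y)"

lemma dep_root: "dep p r r = 0"
  unfolding dep_def by (rule Least_eq_0) simp

lemma dep_step:
  assumes rt: "rooted_tree T r p" and v: "v \<in> T" "v \<noteq> r"
  shows "p v \<in> T \<and> dep p r v = Suc (dep p r (p v))"
proof -
  have pv: "p v \<in> T" using rt v unfolding rooted_tree_def by blast
  obtain n where n: "(p ^^ n) v = r" using rt v unfolding rooted_tree_def by blast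
  have hd: "(p ^^ dep p r v) v = r" unfolding dep_def by (rule LeastI[of _ n]) (rule n)
  have "dep p r v \<noteq> 0"
  proof
    assume "dep p r v = 0"
    then have "v = r" using hd by simp
    with v show False by simp
  qed
  then obtain d' where d': "dep p r v = Suc d'" by (cases "dep p r v") auto
  have "(p ^^ d') (p v) = r" using hd d' by (simp add: funpow_Suc_right del: funpow.simps)
  hence le1: "dep p r (p v) \<le> d'" unfolding dep_def by (rule Least_le)
  have he: "(p ^^ dep p r (p v)) (p v) = r" unfolding dep_def by (rule LeastI[of _ d']) fact
  hence "(p ^^ Suc (dep p r (p v))) v = r" by (simp add: funpow_Suc_right del: funpow.simps)
  hence "dep p r v \<le> Suc (dep p r (p v))" unfolding dep_def by (rule Least_le)
  with le1 d' pv show ?thesis by simp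
qed

lemma dep_iter:
  assumes rt: "rooted_tree T r p" and v: "v \<in> T"
  shows "j \<le> dep p r v \<Longrightarrow> (p ^^ j) v \<in> T \<and> dep p r ((p ^^ j) v) + j = dep p r v"
proof (induction j)
  case 0 then show ?case using v by simp
next
  case (Suc j)
  then have IH: "(p ^^ j) v \<in> T" "dep p r ((p ^^ j) v) + j = dep p r v" by auto
  have "(p ^^ j) v \<noteq> r" using IH Suc.prems dep_root[of p r] by auto
  from dep_step[OF rt IH(1) this] IH Suc.prems show ?case by auto
qed

lemma branch_iter:
  assumes rt: "rooted_tree T r p" and br: "is_branch T r p xs"
  shows "j + d < length xs \<Longrightarrow> (p ^^ d) (xs ! (j + d)) = xs ! j \<and> dep p r (xs ! (j + d)) = dep p r (xs ! j) + d"
proof (induction d)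
  case 0 then show ?case by simp
next
  case (Suc d)
  then have IH: "(p ^^ d) (xs ! (j + d)) = xs ! j" "dep p r (xs ! (j + d)) = dep p r (xs ! j) + d" by auto
  have lt: "Suc (j + d) < length xs" using Suc.prems by simp
  have a: "xs ! Suc (j + d) \<noteq> r" "p (xs ! Suc (j + d)) = xs ! (j + d)"
    using br lt unfolding is_branch_def by auto
  have inT: "xs ! Suc (j + d) \<in> T" using br lt unfolding is_branch_def by (meson nth_mem subsetD)
  have "dep p r (xs ! Suc (j + d)) = Suc (dep p r (xs ! (j + d)))"
    using dep_step[OF rt inT a(1)] a(2) by simp
  moreover have "(p ^^ Suc d) (xs ! Suc (j + d)) = xs ! j"
    using a(2) IH(1) by (simp add: funpow_Suc_right del: funpow.simps)
  ultimately show ?case using IH by simp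
qed

lemma arc_info:
  assumes bt: "burling_tree T r p l c" and u: "u \<in> T" and v: "v \<in> c u"
  shows "\<exists>xs i. is_branch T r p xs \<and> c u = set xs \<and> i < length xs \<and> xs ! i = v \<and>
     xs ! 0 = l (p u) \<and> u \<noteq> r \<and> l (p u) \<noteq> u \<and> p u \<in> T \<and> l (p u) \<in> T \<and> l (p u) \<noteq> r \<and>
     p (l (p u)) = p u \<and> dep p r (l (p u)) = dep p r u \<and>
     (p ^^ i) v = l (p u) \<and> dep p r v = dep p r u + i"
proof -
  have rt: "rooted_tree T r p" using bt unfolding burling_tree_def by blast
  have cne: "c u \<noteq> {}" using v by auto
  have cz: "(u = r \<or> last_born T r p l u) \<longrightarrow> c u = {}"
    using bt u unfolding burling_tree_def by blast
  have nr: "u \<noteq> r" and nlb: "\<not> last_born T r p l u"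
    using cz cne by blast+
  hence lpu: "l (p u) \<noteq> u" using u nr unfolding last_born_def by blast
  have "\<forall>v \<in> T. v \<noteq> r \<and> \<not> last_born T r p l v \<longrightarrow>
        (\<exists>xs. is_branch T r p xs \<and> (xs = [] \<or> hd xs = l (p v)) \<and> c v = set xs)"
    using bt unfolding burling_tree_def by blast
  then obtain xs where xs: "is_branch T r p xs" "xs = [] \<or> hd xs = l (p u)" "c u = set xs"
    using u nr nlb by blast
  have xne: "xs \<noteq> []" using xs(3) v by auto
  have x0: "xs ! 0 = l (p u)" using xs(2) xne by (simp add: hd_conv_nth)
  obtain i where i: "i < length xs" "xs ! i = v" using v xs(3) by (auto simp: in_set_conv_nth)
  have pu: "p u \<in> T" using rt u nr unfolding rooted_tree_def by blast
  have "u \<in> children T r p (p u)" using u nr unfolding children_def by simp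
  hence "children T r p (p u) \<noteq> {}" by auto
  moreover have "\<forall>v \<in> T. children T r p v \<noteq> {} \<longrightarrow> l v \<in> children T r p v"
    using bt unfolding burling_tree_def by blast
  ultimately have "l (p u) \<in> children T r p (p u)" using pu by blast
  hence lc: "l (p u) \<in> T" "l (p u) \<noteq> r" "p (l (p u)) = p u" unfolding children_def by auto
  have dl: "dep p r (l (p u)) = dep p r u"
    using dep_step[OF rt lc(1) lc(2)] dep_step[OF rt u nr] lc(3) by simp
  have bi: "(p ^^ i) (xs ! i) = xs ! 0 \<and> dep p r (xs ! i) = dep p r (xs ! 0) + i"
    using branch_iter[OF rt xs(1), of 0 i] i by simp
  have f1: "(p ^^ i) v = l (p u)" "dep p r v = dep p r u + i" using bi i x0 dl by auto
  show ?thesis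
    by (rule exI[of _ xs], rule exI[of _ i]) (use xs(1,3) i x0 nr lpu pu lc dl f1 in blast)
qed


lemma c_sub:
  assumes bt: "burling_tree T r p l c" and u: "u \<in> T" and v: "v \<in> c u"
  shows "v \<in> T"
proof -
  obtain xs i where "is_branch T r p xs" "c u = set xs"
    using arc_info[OF bt u v] by blast
  then show ?thesis using v unfolding is_branch_def by blast
qed

lemma Bt_irr: "\<not> Bt p r a a"
  unfolding Bt_def by auto

lemma Bt_trans: "Bt p r a b \<Longrightarrow> Bt p r b x \<Longrightarrow> Bt p r a x"
proof -
  assume "Bt p r a b" "Bt p r b x"
  then obtain j k where j: "j > 0" "(p ^^ j) a = b" "dep p r b + j = dep p r a"
    and k: "k > 0" "(p ^^ k) b = x" "dep p r x + k = dep p r b"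
    unfolding Bt_def by blast
  have "(p ^^ (k + j)) a = x" using j k by (simp add: funpow_add)
  moreover have "dep p r x + (k + j) = dep p r a" using j k by simp
  ultimately show ?thesis unfolding Bt_def using j(1) by (intro exI[of _ "k + j"]) simp
qed

lemma t_INC:
  assumes bt: "burling_tree T r p l c" and u: "u \<in> T" and v: "v \<in> c u"
  shows "\<not> Bt p r u v \<and> \<not> Bt p r v u"
proof -
  obtain xs i where I: "(p ^^ i) v = l (p u)" "dep p r v = dep p r u + i" "l (p u) \<noteq> u"
    using arc_info[OF bt u v] by blast
  have "\<not> Bt p r u v"
  proof
    assume "Bt p r u v"
    then obtain j where "j > 0" "dep p r v + j = dep p r u" unfolding Bt_def by blast
    with I show False by simp
  qed
  moreover have "\<not> Bt p r v u"
  proof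
    assume "Bt p r v u"
    then obtain j where j: "j > 0" "(p ^^ j) v = u" "dep p r u + j = dep p r v" unfolding Bt_def by blast
    with I have "j = i" by simp
    with I j show False by simp
  qed
  ultimately show ?thesis by blast
qed

lemma t_CH:
  assumes bt: "burling_tree T r p l c" and u: "u \<in> T" and v: "v \<in> c u" and w: "w \<in> c u"
    and vw: "v \<noteq> w"
  shows "Bt p r v w \<or> Bt p r w v"
proof -
  have rt: "rooted_tree T r p" using bt unfolding burling_tree_def by blast
  obtain xs i where I: "is_branch T r p xs" "c u = set xs" "i < length xs" "xs ! i = v"
    using arc_info[OF bt u v] by blast
  obtain k where K: "k < length xs" "xs ! k = w" using w I(2) by (auto simp: in_set_conv_nth)
  have ik: "i \<noteq> k" using vw I K by auto
  show ?thesis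
  proof (cases "i < k")
    case True
    have "(p ^^ (k - i)) (xs ! (i + (k - i))) = xs ! i \<and> dep p r (xs ! (i + (k - i))) = dep p r (xs ! i) + (k - i)"
      using branch_iter[OF rt I(1), of i "k - i"] K True by simp
    then have "(p ^^ (k - i)) w = v" "dep p r v + (k - i) = dep p r w" using True I K by simp_all
    then have "Bt p r w v" unfolding Bt_def using True by (intro exI[of _ "k - i"]) simp
    then show ?thesis by blast
  next
    case False
    then have ki: "k < i" using ik by simp
    have "(p ^^ (i - k)) (xs ! (k + (i - k))) = xs ! k \<and> dep p r (xs ! (k + (i - k))) = dep p r (xs ! k) + (i - k)"
      using branch_iter[OF rt I(1), of k "i - k"] I ki by simp
    then have "(p ^^ (i - k)) v = w" "dep p r w + (i - k) = dep p r v" using ki I K by simp_all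
    then have "Bt p r v w" unfolding Bt_def using ki by (intro exI[of _ "i - k"]) simp
    then show ?thesis by blast
  qed
qed

lemma t_LA:
  assumes bt: "burling_tree T r p l c" and a: "a \<in> T" and x: "x \<in> T" and b: "b \<in> T"
    and ax: "Bt p r a x" and ab: "b \<in> c a \<or> a \<in> c b" and nbx: "\<not> Bt p r b x"
  shows "a \<in> c b \<and> x \<in> c b"
proof -
  have rt: "rooted_tree T r p" using bt unfolding burling_tree_def by blast
  obtain j where j: "j > 0" "(p ^^ j) a = x" "dep p r x + j = dep p r a" using ax unfolding Bt_def by blast
  obtain j' where j': "j = Suc j'" using j(1) by (cases j) auto
  have "\<not> b \<in> c a"
  proof
    assume "b \<in> c a"
    then obtain ys i where I: "(p ^^ i) b = l (p a)" "dep p r b = dep p r a + i" "p (l (p a)) = p a"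
      using arc_info[OF bt a] by blast
    have "(p ^^ (j + i)) b = (p ^^ j) (l (p a))" using I by (simp add: funpow_add)
    also have "\<dots> = (p ^^ j') (p a)" using j' I(3) by (simp add: funpow_Suc_right del: funpow.simps)
    also have "\<dots> = x" using j' j(2) by (simp add: funpow_Suc_right del: funpow.simps)
    finally have "Bt p r b x" unfolding Bt_def using j I by (intro exI[of _ "j + i"]) simp
    with nbx show False by blast
  qed
  with ab have acb: "a \<in> c b" by blast
  obtain xs i where I: "is_branch T r p xs" "c b = set xs" "i < length xs" "xs ! i = a"
    "xs ! 0 = l (p b)" "p (l (p b)) = p b" "(p ^^ i) a = l (p b)" "dep p r a = dep p r b + i"
    using arc_info[OF bt b acb] by blast
  show ?thesis
  proof (cases "j \<le> i")
    case True
    have "(p ^^ j) (xs ! (i - j + j)) = xs ! (i - j)"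
      using branch_iter[OF rt I(1), of "i - j" j] True I(3) by simp
    then have "x = xs ! (i - j)" using True I(4) j(2) by simp
    then have "x \<in> c b" using I(2,3) by simp
    with acb show ?thesis by blast
  next
    case False
    then obtain t where t: "j - i = Suc t" by (cases "j - i") auto
    have "x = (p ^^ ((j - i) + i)) a" using j(2) False by simp
    also have "\<dots> = (p ^^ (j - i)) ((p ^^ i) a)" by (simp add: funpow_add)
    also have "\<dots> = (p ^^ t) (p (l (p b)))" using I(7) t by (simp add: funpow_Suc_right del: funpow.simps)
    also have "\<dots> = (p ^^ (j - i)) b" using I(6) t by (simp add: funpow_Suc_right del: funpow.simps)
    finally have "Bt p r b x" unfolding Bt_def using j I(8) False by (intro exI[of _ "j - i"]) simp
    with nbx show ?thesis by blast
  qed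
qed

lemma t_AP:
  assumes bt: "burling_tree T r p l c" and w: "w \<in> T" and u: "u \<in> c w" and v: "v \<in> c u"
  shows "dep p r (p w) < dep p r (p u)"
proof -
  have rt: "rooted_tree T r p" using bt unfolding burling_tree_def by blast
  have uT: "u \<in> T" using c_sub[OF bt w u] .
  obtain xs i where I: "(p ^^ i) u = l (p w)" "dep p r u = dep p r w + i" "p (l (p w)) = p w" "w \<noteq> r"
    using arc_info[OF bt w u] by blast
  obtain ys k where K: "u \<noteq> r" "l (p u) \<noteq> u"
    using arc_info[OF bt uT v] by blast
  have "i \<noteq> 0"
  proof
    assume "i = 0"
    then have "u = l (p w)" using I by simp
    then have "l (p u) = u" using I(3) by simp
    with K show False by simp
  qed
  moreover have "dep p r u = Suc (dep p r (p u))" using dep_step[OF rt uT K(1)] by simp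
  moreover have "dep p r w = Suc (dep p r (p w))" using dep_step[OF rt w I(4)] by simp
  ultimately show ?thesis using I(2) by simp
qed




lemma mod_cancel1: "(a::nat) \<le> b \<Longrightarrow> ((k + a) mod m = (k + b) mod m) = (a mod m = b mod m)"
proof -
  assume ab: "a \<le> b"
  have 1: "((k+b) mod m = (k+a) mod m) = (m dvd (k+b) - (k+a))" by (rule mod_eq_dvd_iff_nat) (use ab in simp)
  have 2: "(b mod m = a mod m) = (m dvd b - a)" by (rule mod_eq_dvd_iff_nat) (fact ab)
  have 3: "(k+b) - (k+a) = b - a" by simp
  show ?thesis using 1 2 3 by metis
qed
lemma mod_cancel: "((k::nat) + a) mod m = (k + b) mod m \<longleftrightarrow> a mod m = b mod m"
proof (cases "a \<le> b")
  case True then show ?thesis by (rule mod_cancel1)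
next
  case False then have "b \<le> a" by simp
  from mod_cancel1[OF this, of k m] show ?thesis by (simp add: eq_commute)
qed
lemma rot_arith: "i < (m::nat) \<Longrightarrow> j < m \<Longrightarrow> ((k + j) mod m = Suc ((k + i) mod m) mod m) = (j = Suc i mod m)"
proof -
  assume "i < m" "j < m"
  have "Suc ((k + i) mod m) mod m = (k + Suc i) mod m" by (simp add: mod_Suc_eq)
  then have "((k + j) mod m = Suc ((k + i) mod m) mod m) = (j mod m = Suc i mod m)" using mod_cancel[of k j m "Suc i"] by simp
  then show ?thesis using \<open>j < m\<close> by simp
qed
lemma a1: "(s::nat) < m \<Longrightarrow> ((s + m - 1) mod m + 1) mod m = s"
  by (simp add: mod_simps)
lemma a2: "(s::nat) < m \<Longrightarrow> ((s + m - 1) mod m + 2) mod m = Suc s mod m"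
proof -
  assume "s < m"
  have "((s + m - 1) mod m + 2) mod m = (s + m - 1 + 2) mod m" by (simp add: mod_simps)
  also have "s + m - 1 + 2 = Suc s + m" using \<open>s < m\<close> by simp
  finally show ?thesis by (metis add_Suc mod_add_self2)
qed
lemma a4: "(s::nat) < m \<Longrightarrow> (Suc s mod m + m - 1) mod m = s"
proof -
  assume sm: "s < m"
  show ?thesis
  proof (cases "Suc s < m")
    case True then have "Suc s mod m + m - 1 = s + m" by simp
    then show ?thesis using sm by simp
  next
    case False then have "Suc s = m" using sm by simp
    then show ?thesis by simp
  qed
qed
lemma a5: "(s::nat) < m \<Longrightarrow> Suc ((s + m - 1) mod m) mod m = s"
  using a1 by simp

lemma len4_ne [simp]: "4 \<le> length xs \<Longrightarrow> xs \<noteq> []"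
  by auto

lemma len4: "4 \<le> length xs \<Longrightarrow> xs \<noteq> [] \<and> 0 < length xs \<and> 1 < length xs \<and> 2 < length xs"
  by (cases xs) auto

locale absb =
  fixes V :: "'a set" and E :: "'a \<Rightarrow> 'a \<Rightarrow> bool" and A :: "'a \<Rightarrow> 'a \<Rightarrow> bool"
    and B :: "'a \<Rightarrow> 'a \<Rightarrow> bool" and rk :: "'a \<Rightarrow> nat"
  assumes sg: "sgraph V E"
  and EA: "x \<in> V \<Longrightarrow> y \<in> V \<Longrightarrow> E x y \<longleftrightarrow> A x y \<or> A y x"
  and Bir: "a \<in> V \<Longrightarrow> \<not> B a a"
  and Btr: "a \<in> V \<Longrightarrow> b \<in> V \<Longrightarrow> c \<in> V \<Longrightarrow> B a b \<Longrightarrow> B b c \<Longrightarrow> B a c"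
  and INC: "u \<in> V \<Longrightarrow> v \<in> V \<Longrightarrow> A u v \<Longrightarrow> \<not> B u v \<and> \<not> B v u"
  and CH: "u \<in> V \<Longrightarrow> v \<in> V \<Longrightarrow> w \<in> V \<Longrightarrow> A u v \<Longrightarrow> A u w \<Longrightarrow> v \<noteq> w \<Longrightarrow> B v w \<or> B w v"
  and LA: "a \<in> V \<Longrightarrow> x \<in> V \<Longrightarrow> b \<in> V \<Longrightarrow> B a x \<Longrightarrow> E a b \<Longrightarrow> \<not> B b x \<Longrightarrow> A b a \<and> A b x"
  and AP: "w \<in> V \<Longrightarrow> u \<in> V \<Longrightarrow> v \<in> V \<Longrightarrow> A w u \<Longrightarrow> A u v \<Longrightarrow> rk w < rk u"
begin

lemma Ein: "E x y \<Longrightarrow> x \<in> V \<and> y \<in> V"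
  using sg unfolding sgraph_def by blast

lemma Esym: "E x y \<Longrightarrow> E y x"
  using sg unfolding sgraph_def by blast

lemma AE: "x \<in> V \<Longrightarrow> y \<in> V \<Longrightarrow> A x y \<Longrightarrow> E x y"
  using EA by blast

lemma adj_notB: "E x y \<Longrightarrow> \<not> B x y"
  using EA[of x y] Ein[of x y] INC[of x y] INC[of y x] by blast

lemma prop_step:
  assumes "B a x" "E a b" "\<not> E b x" "x \<in> V"
  shows "B b x"
proof (rule ccontr)
  assume nb: "\<not> B b x"
  have "a \<in> V" "b \<in> V" using Ein[OF assms(2)] by auto
  then have "A b x" using LA[of a x b] assms nb by blast
  then have "E b x" using AE \<open>b \<in> V\<close> assms(4) by blast
  with assms(3) show False by blast
qed

lemma prop_interval:
  assumes adj: "\<And>j. lo \<le> j \<Longrightarrow> j < hi \<Longrightarrow> E (ws!j) (ws!Suc j)"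
   and p: "lo \<le> p" "p \<le> hi" and Bp: "B (ws!p) x" and x: "x \<in> V"
   and nadj: "\<And>j. lo \<le> j \<Longrightarrow> j \<le> hi \<Longrightarrow> j \<noteq> p \<Longrightarrow> \<not> E (ws!j) x"
   and j: "lo \<le> j" "j \<le> hi"
  shows "B (ws!j) x"
proof -
  have up: "p + d \<le> hi \<Longrightarrow> B (ws!(p+d)) x" for d
  proof (induction d)
    case 0 then show ?case using Bp by simp
  next
    case (Suc d)
    then have IH: "B (ws!(p+d)) x" by simp
    have e: "E (ws!(p+d)) (ws!Suc(p+d))" using adj Suc.prems p by simp
    have ne: "\<not> E (ws!(p + Suc d)) x" using nadj Suc.prems p by simp
    show ?case using prop_step[OF IH e _ x] ne by simp
  qed
  have down: "d \<le> p - lo \<Longrightarrow> B (ws!(p-d)) x" for d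
  proof (induction d)
    case 0 then show ?case using Bp by simp
  next
    case (Suc d)
    then have IH: "B (ws!(p-d)) x" by simp
    have s: "Suc (p - Suc d) = p - d" using Suc.prems p by simp
    have e: "E (ws!(p - Suc d)) (ws!Suc (p - Suc d))" using adj Suc.prems p by simp
    hence e': "E (ws!(p-d)) (ws!(p - Suc d))" using s Esym by metis
    have ne: "\<not> E (ws!(p - Suc d)) x" using nadj Suc.prems p by simp
    show ?case using prop_step[OF IH e' _ x] ne by simp
  qed
  show ?thesis
  proof (cases "p \<le> j")
    case True then show ?thesis using up[of "j - p"] j by simp
  next
    case False then show ?thesis using down[of "p - j"] j p by simp
  qed
qed

definition holel :: "'a list \<Rightarrow> bool" where
  "holel vs \<longleftrightarrow> set vs \<subseteq> V \<and> distinct vs \<and> 4 \<le> length vs \<and>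
     (\<forall>i<length vs. \<forall>j<length vs. E (vs!i) (vs!j) \<longleftrightarrow> (j = Suc i mod length vs \<or> i = Suc j mod length vs))"

lemma holel_adj: "holel vs \<Longrightarrow> i < length vs \<Longrightarrow> j < length vs \<Longrightarrow>
   E (vs!i) (vs!j) \<longleftrightarrow> (j = Suc i mod length vs \<or> i = Suc j mod length vs)"
  unfolding holel_def by blast

lemma holel_V: "holel vs \<Longrightarrow> i < length vs \<Longrightarrow> vs!i \<in> V"
  unfolding holel_def by (meson nth_mem subsetD)

lemma holel_len: "holel vs \<Longrightarrow> 4 \<le> length vs"
  unfolding holel_def by blast

lemma holel_dist: "holel vs \<Longrightarrow> i < length vs \<Longrightarrow> j < length vs \<Longrightarrow> vs!i = vs!j \<longleftrightarrow> i = j"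
  unfolding holel_def by (simp add: nth_eq_iff_index_eq)

lemma holel_consec: "holel vs \<Longrightarrow> Suc j < length vs \<Longrightarrow> E (vs!j) (vs!Suc j)"
  using holel_adj[of vs j "Suc j"] by simp

lemma holel_last: "holel vs \<Longrightarrow> E (vs!(length vs - 1)) (vs!0)"
proof -
  assume h: "holel vs"
  have m: "4 \<le> length vs" using holel_len[OF h] .
  then have "vs \<noteq> []" by auto
  then show ?thesis using holel_adj[OF h, of "length vs - 1" 0] m by simp
qed

lemma holel_rotate: "holel vs \<Longrightarrow> holel (rotate k vs)"
proof -
  assume h: "holel vs"
  let ?m = "length vs"
  have "E (rotate k vs ! i) (rotate k vs ! j) \<longleftrightarrow> (j = Suc i mod ?m \<or> i = Suc j mod ?m)"
    if ij: "i < ?m" "j < ?m" for i j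
  proof -
    have m0: "0 < ?m" using ij by (cases vs) auto
    have "rotate k vs ! i = vs ! ((k + i) mod ?m)" "rotate k vs ! j = vs ! ((k + j) mod ?m)"
      using ij by (simp_all add: nth_rotate)
    moreover have "(k + i) mod ?m < ?m" "(k + j) mod ?m < ?m" using m0 by simp_all
    ultimately have "E (rotate k vs ! i) (rotate k vs ! j) \<longleftrightarrow>
      ((k + j) mod ?m = Suc ((k + i) mod ?m) mod ?m \<or> (k + i) mod ?m = Suc ((k + j) mod ?m) mod ?m)"
      using holel_adj[OF h] by simp
    then show ?thesis using rot_arith[of i ?m j k] rot_arith[of j ?m i k] ij by simp
  qed
  then show ?thesis using h unfolding holel_def by simp
qed

lemma holel_rot_nth: "i < length vs \<Longrightarrow> rotate k vs ! i = vs ! ((k + i) mod length vs)"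
  by (simp add: nth_rotate)

lemma source:
  assumes h: "holel ws"
  shows "\<exists>s<length ws. A (ws!s) (ws!(Suc s mod length ws)) \<and> A (ws!s) (ws!((s + length ws - 1) mod length ws))"
proof -
  let ?m = "length ws"
  define nx where "nx s = Suc s mod ?m" for s
  define pv where "pv s = (s + ?m - 1) mod ?m" for s
  have m4: "4 \<le> ?m" using holel_len[OF h] .
  have m0: "0 < ?m" "ws \<noteq> []" using m4 by auto
  have nxl: "s < ?m \<Longrightarrow> nx s < ?m" for s unfolding nx_def using m0 by simp
  have pvl: "s < ?m \<Longrightarrow> pv s < ?m" for s unfolding pv_def using m0 by simp
  have pvnx: "s < ?m \<Longrightarrow> pv (nx s) = s" for s unfolding nx_def pv_def using a4 by simp
  have nxpv: "s < ?m \<Longrightarrow> nx (pv s) = s" for s unfolding nx_def pv_def using a5 by simp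
  have Enx: "s < ?m \<Longrightarrow> E (ws!s) (ws!nx s)" for s using holel_adj[OF h, of s "nx s"] nxl unfolding nx_def by simp
  have V: "s < ?m \<Longrightarrow> ws!s \<in> V" for s using holel_V[OF h] by simp
  define Os where "Os = {s. s < ?m \<and> (A (ws!s) (ws!nx s) \<or> A (ws!s) (ws!pv s))}"
  have "\<exists>s. s \<in> Os"
  proof -
    have "E (ws!0) (ws!nx 0)" using Enx m0 by simp
    then have "A (ws!0) (ws!nx 0) \<or> A (ws!nx 0) (ws!0)" using EA[OF V[OF m0(1)] V[OF nxl[OF m0(1)]]] by simp
    then show ?thesis
    proof
      assume "A (ws!0) (ws!nx 0)" then have "0 \<in> Os" unfolding Os_def using m4 by simp
      then show ?thesis by blast
    next
      assume "A (ws!nx 0) (ws!0)" then have "nx 0 \<in> Os" unfolding Os_def using m4 nxl pvnx by simp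
      then show ?thesis by blast
    qed
  qed
  then obtain s where s: "s \<in> Os" and smin: "\<forall>t. t \<in> Os \<longrightarrow> rk (ws!s) \<le> rk (ws!t)"
    using ex_has_least_nat[of "\<lambda>t. t \<in> Os" _ "\<lambda>t. rk (ws!t)"] by blast
  have sm: "s < ?m" using s unfolding Os_def by simp
  have c1: "A (ws!s) (ws!nx s)"
  proof (rule ccontr)
    assume n: "\<not> A (ws!s) (ws!nx s)"
    then have a1: "A (ws!nx s) (ws!s)" using Enx[OF sm] EA V sm nxl by blast
    have a2: "A (ws!s) (ws!pv s)" using s n unfolding Os_def by simp
    have "rk (ws!nx s) < rk (ws!s)" using AP[OF V[OF nxl[OF sm]] V[OF sm] V[OF pvl[OF sm]] a1 a2] .
    moreover have "nx s \<in> Os" unfolding Os_def using a1 nxl[OF sm] pvnx[OF sm] by simp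
    ultimately show False using smin by fastforce
  qed
  have c2: "A (ws!s) (ws!pv s)"
  proof (rule ccontr)
    assume n: "\<not> A (ws!s) (ws!pv s)"
    have "E (ws!pv s) (ws!s)" using Enx[OF pvl[OF sm]] nxpv[OF sm] by simp
    then have a1: "A (ws!pv s) (ws!s)" using n EA V sm pvl by blast
    have "rk (ws!pv s) < rk (ws!s)" using AP[OF V[OF pvl[OF sm]] V[OF sm] V[OF nxl[OF sm]] a1 c1] .
    moreover have "pv s \<in> Os" unfolding Os_def using a1 pvl[OF sm] nxpv[OF sm] by simp
    ultimately show False using smin by fastforce
  qed
  show ?thesis using sm c1 c2 unfolding nx_def pv_def by blast
qed

definition hang :: "'a list \<Rightarrow> bool" where
  "hang ws \<longleftrightarrow> (\<forall>j. 2 \<le> j \<and> j \<le> length ws - 2 \<longrightarrow> B (ws!j) (ws!0)) \<and>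
     A (ws!1) (ws!0) \<and> A (ws!1) (ws!2) \<and>
     A (ws!(length ws - 1)) (ws!0) \<and> A (ws!(length ws - 1)) (ws!(length ws - 2))"

lemma hang_of:
  assumes h: "holel ws" and p: "2 \<le> p" "p \<le> length ws - 2" and Bp: "B (ws!p) (ws!0)"
  shows "hang ws"
proof -
  let ?m = "length ws"
  have m4: "4 \<le> ?m" using holel_len[OF h] .
  have m0: "0 < ?m" "ws \<noteq> []" using m4 by auto
  have V: "j < ?m \<Longrightarrow> ws!j \<in> V" for j using holel_V[OF h] by simp
  have mid: "B (ws!j) (ws!0)" if j: "2 \<le> j" "j \<le> ?m - 2" for j
  proof (rule prop_interval[of 2 "?m - 2" ws p])
    show "E (ws!j) (ws!Suc j)" if "2 \<le> j" "j < ?m - 2" for j using holel_consec[OF h] that by simp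
    show "\<not> E (ws!j) (ws!0)" if "2 \<le> j" "j \<le> ?m - 2" "j \<noteq> p" for j
      using holel_adj[OF h, of j 0] that m4 m0 by simp
    show "ws!0 \<in> V" using V len4[OF m4] by simp
  qed (use p Bp j in auto)
  have B2: "B (ws!2) (ws!0)" using mid m4 by simp
  have Bm2: "B (ws!(?m - 2)) (ws!0)" using mid m4 by simp
  have E12: "E (ws!1) (ws!2)" using holel_adj[OF h, of 1 2] m4 by simp
  have E21: "E (ws!2) (ws!1)" using Esym[OF E12] .
  have E01: "E (ws!0) (ws!1)" using holel_adj[OF h, of 0 1] m4 by simp
  have E10: "E (ws!1) (ws!0)" using Esym[OF E01] .
  have r1: "A (ws!1) (ws!2) \<and> A (ws!1) (ws!0)"
    using LA[OF V V V B2 E21] adj_notB[OF E10] m4 by simp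
  have Em: "E (ws!(?m - 2)) (ws!(?m - 1))" using holel_consec[OF h, of "?m - 2"] m4
    by (simp add: Suc_diff_Suc numeral_2_eq_2)
  have Em0: "E (ws!(?m - 1)) (ws!0)" using holel_last[OF h] .
  have r2: "A (ws!(?m - 1)) (ws!(?m - 2)) \<and> A (ws!(?m - 1)) (ws!0)"
    using LA[OF V V V Bm2 Em] adj_notB[OF Em0] m4 by simp
  show ?thesis unfolding hang_def using mid r1 r2 by blast
qed

lemma hang_exists:
  assumes h: "holel ws"
  shows "\<exists>ws'. holel ws' \<and> set ws' = set ws \<and> hang ws'"
proof -
  let ?m = "length ws"
  have m4: "4 \<le> ?m" using holel_len[OF h] .
  have m0: "0 < ?m" "ws \<noteq> []" using m4 by auto
  obtain s where s: "s < ?m" "A (ws!s) (ws!(Suc s mod ?m))" "A (ws!s) (ws!((s + ?m - 1) mod ?m))"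
    using source[OF h] by blast
  define k where "k = (s + ?m - 1) mod ?m"
  define w1 where "w1 = rotate k ws"
  have h1: "holel w1" unfolding w1_def using holel_rotate[OF h] .
  have l1: "length w1 = ?m" unfolding w1_def by simp
  have w0: "w1!0 = ws!((s + ?m - 1) mod ?m)" unfolding w1_def k_def using m0 by (simp add: nth_rotate mod_simps)
  have w1: "w1!1 = ws!s" unfolding w1_def k_def using m4 s a1[of s ?m] by (simp add: nth_rotate)
  have w2: "w1!2 = ws!(Suc s mod ?m)" unfolding w1_def k_def using m4 s a2[of s ?m] by (simp add: nth_rotate)
  have V1: "j < ?m \<Longrightarrow> w1!j \<in> V" for j using holel_V[OF h1] l1 by simp
  have ne: "w1!0 \<noteq> w1!2" using holel_dist[OF h1, of 0 2] l1 len4[OF m4] by simp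
  have "B (w1!0) (w1!2) \<or> B (w1!2) (w1!0)"
    using CH[OF V1 V1 V1, of 1 0 2] s w0 w1 w2 ne m4 len4[OF m4] by simp
  then show ?thesis
  proof
    assume "B (w1!2) (w1!0)"
    then have "hang w1" using hang_of[OF h1, of 2] l1 m4 by simp
    then show ?thesis using h1 unfolding w1_def by auto
  next
    assume b: "B (w1!0) (w1!2)"
    define w2 where "w2 = rotate 2 w1"
    have h2: "holel w2" unfolding w2_def using holel_rotate[OF h1] .
    have l2: "length w2 = ?m" unfolding w2_def using l1 by simp
    have x0: "w2!0 = w1!2" unfolding w2_def using l1 m4 by (simp add: nth_rotate)
    have ss: "Suc (Suc (?m - 2)) = ?m" using m4 by simp
    have x1: "w2!(?m - 2) = w1!0" unfolding w2_def using l1 m4 ss by (simp add: nth_rotate)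
    have "hang w2" using hang_of[OF h2, of "?m - 2"] l2 m4 b x0 x1 by simp
    then show ?thesis using h2 unfolding w2_def w1_def by auto
  qed
qed

lemma nbr0:
  assumes h: "holel ws" and y: "y \<in> set ws" and e: "E (ws!0) y"
  shows "y = ws!1 \<or> y = ws!(length ws - 1)"
proof -
  obtain j where j: "j < length ws" "ws!j = y" using y by (auto simp: in_set_conv_nth)
  have m4: "4 \<le> length ws" using holel_len[OF h] .
  have m0: "ws \<noteq> []" using m4 by auto
  have "j = Suc 0 mod length ws \<or> 0 = Suc j mod length ws" using holel_adj[OF h, of 0 j] j e m4 m0 by simp
  then have "j = 1 \<or> j = length ws - 1"
  proof
    assume "j = Suc 0 mod length ws" then show ?thesis using m4 by simp
  next
    assume a: "0 = Suc j mod length ws"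
    show ?thesis
    proof (rule ccontr)
      assume "\<not> (j = 1 \<or> j = length ws - 1)"
      then have "Suc j < length ws" using j by linarith
      then show False using a by simp
    qed
  qed
  then show ?thesis using j by auto
qed

lemma hang_mid:
  assumes h: "holel ws" and hg: "hang ws" and y: "y \<in> set ws"
    and n: "y \<noteq> ws!0" "y \<noteq> ws!1" "y \<noteq> ws!(length ws - 1)"
  shows "B y (ws!0)"
proof -
  obtain j where j: "j < length ws" "ws!j = y" using y by (auto simp: in_set_conv_nth)
  have "j \<noteq> 0" using n(1) j by metis
  moreover have "j \<noteq> 1" using n(2) j by metis
  moreover have "j \<noteq> length ws - 1" using n(3) j by metis
  ultimately have "2 \<le> j" "j \<le> length ws - 2" using j by auto
  then show ?thesis using hg j unfolding hang_def by blast
qed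

lemma prop_cycle_except:
  assumes h: "holel ws" and w: "w \<in> set ws" and z: "z \<in> set ws" "z \<noteq> w" and Bz: "B z x" and x: "x \<in> V"
    and nadj: "\<And>y. y \<in> set ws \<Longrightarrow> y \<noteq> w \<Longrightarrow> y \<noteq> z \<Longrightarrow> \<not> E y x"
    and y: "y \<in> set ws" "y \<noteq> w"
  shows "B y x"
proof -
  let ?m = "length ws"
  obtain q where q: "q < ?m" "ws!q = w" using w by (auto simp: in_set_conv_nth)
  define w' where "w' = rotate q ws"
  have h': "holel w'" unfolding w'_def using holel_rotate[OF h] .
  have l': "length w' = ?m" unfolding w'_def by simp
  have s': "set w' = set ws" unfolding w'_def by simp
  have m4: "4 \<le> ?m" using holel_len[OF h] .
  have m0: "0 < ?m" using len4[OF m4] by simp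
  have w0: "w'!0 = w" unfolding w'_def using q m0 by (simp add: nth_rotate)
  obtain pz where pz: "pz < ?m" "w'!pz = z" using z s' l' by (metis in_set_conv_nth)
  obtain py where py: "py < ?m" "w'!py = y" using y s' l' by (metis in_set_conv_nth)
  have pz0: "pz \<noteq> 0"
  proof
    assume "pz = 0" then have "z = w" using pz w0 by simp
    with z(2) show False by simp
  qed
  have py0: "py \<noteq> 0"
  proof
    assume "py = 0" then have "y = w" using py w0 by simp
    with y(2) show False by simp
  qed
  have "B (w'!py) x"
  proof (rule prop_interval[of 1 "?m - 1" w' pz x py])
    show "E (w'!j) (w'!Suc j)" if "1 \<le> j" "j < ?m - 1" for j using holel_consec[OF h'] that l' by simp
    show "\<not> E (w'!j) x" if jj: "1 \<le> j" "j \<le> ?m - 1" "j \<noteq> pz" for j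
    proof -
      have jm: "j < ?m" using jj m4 by simp
      have "w'!j \<noteq> w" using holel_dist[OF h', of j 0] jj jm l' w0 m4 by simp
      moreover have "w'!j \<noteq> z" using holel_dist[OF h', of j pz] jj jm l' pz by simp
      moreover have "w'!j \<in> set ws" using jm l' s' by (metis nth_mem)
      ultimately show ?thesis using nadj by blast
    qed
  qed (use pz pz0 py py0 Bz x in auto)
  then show ?thesis using py by simp
qed

end

locale absf = absb +
  fixes H :: "'a set" and Hf :: "'a set \<Rightarrow> 'a set"
  assumes Hh: "is_hole V E H"
  and pet: "\<And>e. e \<in> induced_edges E H \<Longrightarrow> is_hole V E (Hf e) \<and> e \<subseteq> Hf e \<and> H \<inter> Hf e = e"
  and dis: "\<And>e f. e \<in> induced_edges E H \<Longrightarrow> f \<in> induced_edges E H \<Longrightarrow> e \<noteq> f \<Longrightarrow> Hf e \<inter> Hf f = e \<inter> f"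
  and Eflw: "\<And>x y. E x y \<Longrightarrow> \<exists>e \<in> induced_edges E H. {x, y} \<in> induced_edges E (Hf e)"
begin

lemma hole_holel: "is_hole V E C \<Longrightarrow> \<exists>vs. holel vs \<and> set vs = C"
  unfolding is_hole_def holel_def by blast

lemma IE_mem: "x \<in> H \<Longrightarrow> y \<in> H \<Longrightarrow> E x y \<Longrightarrow> {x, y} \<in> induced_edges E H"
  unfolding induced_edges_def by blast

lemma IE_sub: "e \<in> induced_edges E H \<Longrightarrow> e \<subseteq> H"
  unfolding induced_edges_def by blast

lemma share: "E x y \<Longrightarrow> \<exists>e \<in> induced_edges E H. x \<in> Hf e \<and> y \<in> Hf e"
proof -
  assume "E x y"
  then obtain e where e: "e \<in> induced_edges E H" "{x, y} \<in> induced_edges E (Hf e)" using Eflw by blast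
  then obtain x' y' where "{x, y} = {x', y'}" "x' \<in> Hf e" "y' \<in> Hf e"
    unfolding induced_edges_def by blast
  then have "x \<in> Hf e" "y \<in> Hf e" by (auto simp: doubleton_eq_iff)
  with e show ?thesis by blast
qed

lemma FL6:
  assumes e: "e \<in> induced_edges E H" and w: "w \<in> Hf e" "w \<notin> H" and z: "z \<notin> Hf e"
  shows "\<not> E w z"
proof
  assume "E w z"
  then obtain e' where e': "e' \<in> induced_edges E H" "w \<in> Hf e'" "z \<in> Hf e'" using share by blast
  show False
  proof (cases "e' = e")
    case True then show False using e' z by simp
  next
    case False
    then have "Hf e \<inter> Hf e' = e \<inter> e'" using dis e e'(1) by blast
    then have "w \<in> e" using w e' by blast
    then show False using w IE_sub[OF e] by blast
  qed
qed

lemma side: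
  assumes bH: "b \<in> H" "x1 \<in> H" "h2 \<in> H" and d: "b \<noteq> x1" "x1 \<noteq> h2" "b \<noteq> h2"
    and ebx: "E b x1" and nbh: "\<not> E b h2" and a1: "A x1 b" "A x1 h2" and Bh: "B h2 b"
    and hs: "holel hs" "set hs = H"
  shows "\<exists>ws. holel ws \<and> set ws = Hf {b, x1} \<and> hang ws \<and> ws!0 \<notin> H"
proof -
  define e where "e = {b, x1}"
  have eIE: "e \<in> induced_edges E H" unfolding e_def using IE_mem bH ebx by blast
  have pe: "is_hole V E (Hf e)" "e \<subseteq> Hf e" "H \<inter> Hf e = e" using pet[OF eIE] by auto
  obtain ws0 where ws0: "holel ws0" "set ws0 = Hf e" using hole_holel[OF pe(1)] by blast
  obtain ws where ws: "holel ws" "set ws = Hf e" "hang ws" using hang_exists[OF ws0(1)] ws0(2) by blast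
  let ?m = "length ws"
  have m4: "4 \<le> ?m" using holel_len[OF ws(1)] .
  have V: "j < ?m \<Longrightarrow> ws!j \<in> V" for j using holel_V[OF ws(1)] by simp
  have HV: "H \<subseteq> V" using Hh unfolding is_hole_def by blast
  have bx: "b \<in> Hf e" "x1 \<in> Hf e" using pe(2) unfolding e_def by auto
  have inH: "y \<in> Hf e \<Longrightarrow> y \<in> H \<Longrightarrow> y = b \<or> y = x1" for y using pe(3) unfolding e_def by blast
  have c0: "ws!0 \<in> Hf e" using ws(2) len4[OF m4] nth_mem[of 0 ws] by simp
  have "ws!0 \<notin> H"
  proof
    assume cH: "ws!0 \<in> H"
    then have "ws!0 = b \<or> ws!0 = x1" using inH c0 by blast
    then show False
    proof
      assume cx: "ws!0 = x1"
      have "b = ws!1 \<or> b = ws!(?m - 1)" using nbr0[OF ws(1)] bx ws(2) cx ebx Esym by metis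
      then have "A b x1" using ws(3) cx unfolding hang_def by auto
      then show False using AP[of x1 b x1] AP[of b x1 b] a1 HV bH by fastforce
    next
      assume cb: "ws!0 = b"
      have "x1 = ws!1 \<or> x1 = ws!(?m - 1)" using nbr0[OF ws(1)] bx ws(2) cb ebx by metis
      then obtain c' where c': "c' \<in> Hf e" "c' \<noteq> b" "c' \<noteq> x1" "\<not> E b c'" "A x1 c'" "B c' b"
      proof
        assume x: "x1 = ws!1"
        show ?thesis
        proof (rule that[of "ws!2"])
          show "ws!2 \<in> Hf e" using ws(2) m4 nth_mem[of 2 ws] by simp
          show "ws!2 \<noteq> b" using holel_dist[OF ws(1), of 2 0] cb m4 len4[OF m4] by simp
          show "ws!2 \<noteq> x1" using holel_dist[OF ws(1), of 2 1] x m4 len4[OF m4] by simp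
          show "\<not> E b (ws!2)" using holel_adj[OF ws(1), of 0 2] cb m4 by simp
          show "A x1 (ws!2)" using ws(3) x unfolding hang_def by simp
          show "B (ws!2) b" using ws(3) cb m4 unfolding hang_def by simp
        qed
      next
        assume x: "x1 = ws!(?m - 1)"
        show ?thesis
        proof (rule that[of "ws!(?m - 2)"])
          show "ws!(?m - 2) \<in> Hf e" using ws(2) m4 nth_mem[of "?m - 2" ws] by simp
          show "ws!(?m - 2) \<noteq> b" using holel_dist[OF ws(1), of "?m - 2" 0] cb m4 by simp
          show "ws!(?m - 2) \<noteq> x1" using holel_dist[OF ws(1), of "?m - 2" "?m - 1"] x m4 by simp
          show "\<not> E b (ws!(?m - 2))" using holel_adj[OF ws(1), of 0 "?m - 2"] cb m4 by simp
          show "A x1 (ws!(?m - 2))" using ws(3) x unfolding hang_def by simp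
          show "B (ws!(?m - 2)) b" using ws(3) cb m4 unfolding hang_def by simp
        qed
      qed
      have c'H: "c' \<notin> H" using inH c' by blast
      have c'V: "c' \<in> V" using c'(1) ws(2) holel_def ws(1) by blast
      have "c' \<noteq> h2" using c'H bH by blast
      then have "B c' h2 \<or> B h2 c'" using CH[of x1 c' h2] c'(5) a1(2) c'V HV bH by blast
      then show False
      proof
        assume B1: "B c' h2"
        have "B b h2"
        proof (rule prop_cycle_except[OF ws(1), of x1 c' h2 b])
          show "\<not> E y h2" if "y \<in> set ws" "y \<noteq> x1" "y \<noteq> c'" for y
          proof (cases "y = b")
            case True then show ?thesis using nbh by simp
          next
            case False
            then have "y \<notin> H" using inH that ws(2) by blast
            moreover have "h2 \<notin> Hf e" using inH bH d by blast
            ultimately show ?thesis using FL6[OF eIE] that ws(2) by blast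
          qed
        qed (use ws(2) bx c' B1 HV bH d in auto)
        then show False using Btr[of b h2 b] Bh Bir[of b] HV bH by blast
      next
        assume B2: "B h2 c'"
        have "B b c'"
        proof (rule prop_cycle_except[OF hs(1), of x1 h2 c' b])
          show "\<not> E y c'" if "y \<in> set hs" "y \<noteq> x1" "y \<noteq> h2" for y
          proof (cases "y = b")
            case True then show ?thesis using c'(4) by simp
          next
            case False
            then have "y \<notin> Hf e" using inH that hs(2) by blast
            then show ?thesis using FL6[OF eIE c'(1) c'H] Esym by blast
          qed
        qed (use hs(2) bH d B2 c'V in auto)
        then show False using Btr[of b c' b] c'(6) Bir[of b] HV bH c'V by blast
      qed
    qed
  qed
  then show ?thesis using ws unfolding e_def by blast
qed

lemma final:
  assumes bH: "b \<in> H" "x1 \<in> H" "x2 \<in> H" and d: "b \<noteq> x1" "b \<noteq> x2" "x1 \<noteq> x2"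
    and e1: "E b x1" and e2: "E b x2" and hs: "holel hs" "set hs = H"
    and ws1: "holel ws1" "set ws1 = Hf {b, x1}" "hang ws1" "ws1!0 \<notin> H"
    and c2: "c2 \<in> Hf {b, x2}" "c2 \<notin> H"
  shows "B c2 (ws1!0)"
proof -
  define c1 where "c1 = ws1!0"
  let ?m = "length ws1"
  have m4: "4 \<le> ?m" using holel_len[OF ws1(1)] .
  have E1: "{b, x1} \<in> induced_edges E H" using IE_mem bH e1 by blast
  have E2: "{b, x2} \<in> induced_edges E H" using IE_mem bH e2 by blast
  have ne: "{b, x1} \<noteq> {b, x2}" using d by (auto simp: doubleton_eq_iff)
  have int: "Hf {b, x1} \<inter> Hf {b, x2} = {b}" using dis[OF E1 E2 ne] d by auto
  have p1: "{b, x1} \<subseteq> Hf {b, x1}" "H \<inter> Hf {b, x1} = {b, x1}" using pet[OF E1] by auto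
  have p2: "is_hole V E (Hf {b, x2})" "{b, x2} \<subseteq> Hf {b, x2}" "H \<inter> Hf {b, x2} = {b, x2}" using pet[OF E2] by auto
  obtain us where us: "holel us" "set us = Hf {b, x2}" using hole_holel[OF p2(1)] by blast
  have c1P: "c1 \<in> Hf {b, x1}" unfolding c1_def using ws1(2) len4[OF m4] nth_mem[of 0 ws1] by simp
  have c1H: "c1 \<notin> H" unfolding c1_def using ws1(4) .
  have c1V: "c1 \<in> V" using c1P ws1(1,2) unfolding holel_def by blast
  have nadj2: "\<not> E y c1" if "y \<in> Hf {b, x2}" "y \<noteq> b" "y \<noteq> x2" for y
  proof -
    have "y \<notin> H" using p2(3) that by blast
    moreover have "y \<notin> Hf {b, x1}" using int that by blast
    ultimately show ?thesis using FL6[OF E1 c1P c1H] Esym by blast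
  qed
  have fromb: "B c2 c1" if Bb: "B b c1"
  proof (rule prop_cycle_except[OF us(1), of x2 b c1 c2])
    show "\<not> E y c1" if "y \<in> set us" "y \<noteq> x2" "y \<noteq> b" for y using nadj2 that us(2) by blast
  qed (use us(2) p2(2) d Bb c1V c2 bH in auto)
  have "B b c1 \<or> B x1 c1"
  proof (rule ccontr)
    assume n: "\<not> (B b c1 \<or> B x1 c1)"
    have bn: "b \<noteq> c1" "x1 \<noteq> c1" using c1H bH by auto
    have "b = ws1!1 \<or> b = ws1!(?m - 1)" using hang_mid[OF ws1(1) ws1(3), of b] p1(1) ws1(2) bn n unfolding c1_def by auto
    moreover have "x1 = ws1!1 \<or> x1 = ws1!(?m - 1)" using hang_mid[OF ws1(1) ws1(3), of x1] p1(1) ws1(2) bn n unfolding c1_def by auto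
    ultimately have "E (ws1!1) (ws1!(?m - 1))" using e1 d(1) Esym by auto
    moreover have sm: "Suc (?m - 1) = ?m" using m4 by simp
    moreover have "?m - 1 < ?m" "1 < ?m" "?m - 1 \<noteq> Suc 1 mod ?m" using m4 by auto
    moreover have "1 \<noteq> Suc (?m - 1) mod ?m" using sm by simp
    ultimately show False using holel_adj[OF ws1(1), of 1 "?m - 1"] by blast
  qed
  then show ?thesis
  proof
    assume "B b c1" then show ?thesis using fromb unfolding c1_def by simp
  next
    assume Bx: "B x1 c1"
    have "B x2 c1"
    proof (rule prop_cycle_except[OF hs(1), of b x1 c1 x2])
      show "\<not> E y c1" if "y \<in> set hs" "y \<noteq> b" "y \<noteq> x1" for y
      proof -
        have "y \<notin> Hf {b, x1}" using p1(2) that hs(2) by blast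
        then show ?thesis using FL6[OF E1 c1P c1H] Esym by blast
      qed
    qed (use hs(2) bH d Bx c1V in auto)
    have "B c2 c1"
    proof (rule prop_cycle_except[OF us(1), of b x2 c1 c2])
      show "\<not> E y c1" if "y \<in> set us" "y \<noteq> b" "y \<noteq> x2" for y using nadj2 that us(2) by blast
    qed (use us(2) p2(2) d \<open>B x2 c1\<close> c1V c2 bH in auto)
    then show ?thesis unfolding c1_def by simp
  qed
qed

lemma no_flower: False
proof -
  obtain hs0 where hs0: "holel hs0" "set hs0 = H" using hole_holel[OF Hh] by blast
  obtain hs where hs: "holel hs" "set hs = H" "hang hs" using hang_exists[OF hs0(1)] hs0(2) by blast
  let ?m = "length hs"
  have m4: "4 \<le> ?m" using holel_len[OF hs(1)] .
  have inH: "j < ?m \<Longrightarrow> hs!j \<in> H" for j using hs(2) by (metis nth_mem)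
  have V: "j < ?m \<Longrightarrow> hs!j \<in> V" for j using holel_V[OF hs(1)] by simp
  have dd: "i < ?m \<Longrightarrow> j < ?m \<Longrightarrow> hs!i = hs!j \<longleftrightarrow> i = j" for i j using holel_dist[OF hs(1)] by simp
  define b where "b = hs!0"
  define x1 where "x1 = hs!1"
  define x2 where "x2 = hs!(?m - 1)"
  define h2 where "h2 = hs!2"
  define h2' where "h2' = hs!(?m - 2)"
  have mem: "b \<in> H" "x1 \<in> H" "x2 \<in> H" "h2 \<in> H" "h2' \<in> H"
    unfolding b_def x1_def x2_def h2_def h2'_def using inH len4[OF m4] by auto
  have ix: "0 < ?m" "1 < ?m" "2 < ?m" "?m - 1 < ?m" "?m - 2 < ?m" "?m - 1 \<noteq> 0" "?m - 1 \<noteq> 1"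
    "?m - 2 \<noteq> 0" "?m - 2 \<noteq> ?m - 1" "(2::nat) \<noteq> 0" "(2::nat) \<noteq> 1" using m4 by auto
  have dst: "b \<noteq> x1" "b \<noteq> x2" "x1 \<noteq> x2" "b \<noteq> h2" "x1 \<noteq> h2" "b \<noteq> h2'" "x2 \<noteq> h2'"
    unfolding b_def x1_def x2_def h2_def h2'_def
    using dd[of 0 1] dd[of 0 "?m - 1"] dd[of 1 "?m - 1"] dd[of 0 2] dd[of 1 2] dd[of 0 "?m - 2"]
      dd[of "?m - 1" "?m - 2"] ix by auto
  have ebx1: "E b x1" unfolding b_def x1_def using holel_consec[OF hs(1), of 0] m4 by simp
  have ebx2: "E b x2" unfolding b_def x2_def using holel_last[OF hs(1)] Esym by blast
  have nbh2: "\<not> E b h2" unfolding b_def h2_def using holel_adj[OF hs(1), of 0 2] m4 by simp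
  have nbh2': "\<not> E b h2'" unfolding b_def h2'_def using holel_adj[OF hs(1), of 0 "?m - 2"] m4 by simp
  have hg: "A x1 b" "A x1 h2" "A x2 b" "A x2 h2'" "B h2 b" "B h2' b"
    using hs(3) m4 unfolding hang_def b_def x1_def x2_def h2_def h2'_def by auto
  obtain ws1 where ws1: "holel ws1" "set ws1 = Hf {b, x1}" "hang ws1" "ws1!0 \<notin> H"
    using side[of b x1 h2] mem dst ebx1 nbh2 hg hs by blast
  obtain ws2 where ws2: "holel ws2" "set ws2 = Hf {b, x2}" "hang ws2" "ws2!0 \<notin> H"
    using side[of b x2 h2'] mem dst ebx2 nbh2' hg hs by blast
  have m1: "ws1!0 \<in> Hf {b, x1}" using ws1(2) len4[OF holel_len[OF ws1(1)]] nth_mem[of 0 ws1] by simp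
  have m2: "ws2!0 \<in> Hf {b, x2}" using ws2(2) len4[OF holel_len[OF ws2(1)]] nth_mem[of 0 ws2] by simp
  have B1: "B (ws2!0) (ws1!0)" using final[of b x1 x2 hs ws1 "ws2!0"] mem dst ebx1 ebx2 hs ws1 m2 ws2(4) by blast
  have B2: "B (ws1!0) (ws2!0)" using final[of b x2 x1 hs ws2 "ws1!0"] mem dst ebx1 ebx2 hs ws2 m1 ws1(4) by blast
  have V1: "ws1!0 \<in> V" using holel_V[OF ws1(1)] holel_len[OF ws1(1)] by simp
  have V2: "ws2!0 \<in> V" using holel_V[OF ws2(1)] holel_len[OF ws2(1)] by simp
  show False using Btr[OF V1 V2 V1 B2 B1] Bir[OF V1] by blast
qed

end



theorem lemma7p1:
  fixes V :: "'a set" and E :: "'a \<Rightarrow> 'a \<Rightarrow> bool"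
  assumes "sgraph V E" and "flower V E"
  shows "\<not> burling_graph V E"
proof
  assume "burling_graph V E"
  then obtain T r p l c f where bt: "burling_tree T r p l c" and inj: "inj_on f V"
    and img: "f ` V \<subseteq> T"
    and adj: "\<forall>x \<in> V. \<forall>y \<in> V. E x y \<longleftrightarrow> (f y \<in> c (f x) \<or> f x \<in> c (f y))"
    unfolding burling_graph_def by (elim exE conjE) (rule that; assumption)
  obtain H Hf where fl1: "is_hole V E H"
    and fl2: "\<forall>e \<in> induced_edges E H. is_hole V E (Hf e) \<and> e \<subseteq> Hf e \<and> H \<inter> Hf e = e"
    and fl3: "\<forall>e \<in> induced_edges E H. \<forall>g \<in> induced_edges E H. e \<noteq> g \<longrightarrow> Hf e \<inter> Hf g = e \<inter> g"
    and fl5: "\<forall>x y. E x y \<longleftrightarrow> (\<exists>e \<in> induced_edges E H. {x, y} \<in> induced_edges E (Hf e))"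
    using assms(2) unfolding flower_def by (elim exE conjE) (rule that; assumption)
  have fT: "x \<in> V \<Longrightarrow> f x \<in> T" for x using img by blast
  interpret absf V E "\<lambda>x y. f y \<in> c (f x)" "\<lambda>a x. Bt p r (f a) (f x)" "\<lambda>u. dep p r (p (f u))" H Hf
  proof unfold_locales
    show "sgraph V E" by (rule assms(1))
  next
    fix x y assume "x \<in> V" "y \<in> V"
    then show "E x y = (f y \<in> c (f x) \<or> f x \<in> c (f y))" by (rule adj[rule_format])
  next
    fix a assume "a \<in> V"
    show "\<not> Bt p r (f a) (f a)" by (rule Bt_irr)
  next
    fix a b d assume "a \<in> V" "b \<in> V" "d \<in> V" "Bt p r (f a) (f b)" "Bt p r (f b) (f d)"
    then show "Bt p r (f a) (f d)" using Bt_trans by blast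
  next
    fix u v assume "u \<in> V" "v \<in> V" "f v \<in> c (f u)"
    then show "\<not> Bt p r (f u) (f v) \<and> \<not> Bt p r (f v) (f u)" using t_INC[OF bt fT] by blast
  next
    fix u v w assume a: "u \<in> V" "v \<in> V" "w \<in> V" "f v \<in> c (f u)" "f w \<in> c (f u)" "v \<noteq> w"
    then have "f v \<noteq> f w" using inj by (meson inj_on_eq_iff)
    then show "Bt p r (f v) (f w) \<or> Bt p r (f w) (f v)" using t_CH[OF bt fT[OF a(1)] a(4) a(5)] by blast
  next
    fix a x b assume a: "a \<in> V" "x \<in> V" "b \<in> V" "Bt p r (f a) (f x)" "E a b" "\<not> Bt p r (f b) (f x)"
    then have "f b \<in> c (f a) \<or> f a \<in> c (f b)" using adj[rule_format, OF a(1) a(3)] a(5) by simp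
    then show "f a \<in> c (f b) \<and> f x \<in> c (f b)" using t_LA[OF bt fT[OF a(1)] fT[OF a(2)] fT[OF a(3)] a(4) _ a(6)] by blast
  next
    fix w u v assume a: "w \<in> V" "u \<in> V" "v \<in> V" "f u \<in> c (f w)" "f v \<in> c (f u)"
    then show "dep p r (p (f w)) < dep p r (p (f u))" using t_AP[OF bt fT[OF a(1)] a(4) a(5)] by blast
  next
    show "is_hole V E H" by (rule fl1)
  next
    fix e assume "e \<in> induced_edges E H"
    then show "is_hole V E (Hf e) \<and> e \<subseteq> Hf e \<and> H \<inter> Hf e = e" by (rule fl2[rule_format])
  next
    fix e g assume "e \<in> induced_edges E H" "g \<in> induced_edges E H" "e \<noteq> g"
    then show "Hf e \<inter> Hf g = e \<inter> g" using fl3 by (simp add: Ball_def)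
  next
    fix x y assume "E x y"
    then show "\<exists>e \<in> induced_edges E H. {x, y} \<in> induced_edges E (Hf e)" by (rule iffD1[OF fl5[rule_format]])
  qed
  show False by (rule no_flower)
qed



end
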